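(* Let $f(z)=z+\sum_{k=2}^\infty b_kz^k\in\mathscr{S}^*_\wp$ and $\alpha=(1+e)^2$. Then $\sum_{k=2}^\infty (k^2-\alpha)|b_k|^2\le\alpha-1$. Consequently, if $f(z)=z+\sum_{k\ge4}b_kz^k\in\mathscr{S}^*_\wp$, then $|b_k|\le\sqrt{(\alpha-1)/(k^2-\alpha)}$ for all $k\ge4$.
   Context: $\mathbb{D}$ is the unit disk; $\mathcal{A}$ is the class of analytic $f$ on $\mathbb{D}$ with $f(0)=0,f'(0)=1$. $f\prec g$ means $f=g\circ\omega$ for analytic $\omega:\mathbb{D}\to\mathbb{D}$, $\omega(0)=0$. $\wp(z)=1+ze^z$, $\mathscr{S}^*_\wp=\{f\in\mathcal{A}:zf'(z)/f(z)\prec\wp(z)\}$. *)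

theory Defs
  imports "HOL-Analysis.Analysis"
begin

definition subordinate :: "(complex \<Rightarrow> complex) \<Rightarrow> (complex \<Rightarrow> complex) \<Rightarrow> bool" where
  "subordinate f g \<longleftrightarrow> (\<exists>\<omega>. \<omega> holomorphic_on ball 0 1 \<and> \<omega> 0 = 0 \<and>
      (\<forall>z\<in>ball 0 1. \<omega> z \<in> ball 0 1) \<and> (\<forall>z\<in>ball 0 1. f z = g (\<omega> z)))"

definition wp :: "complex \<Rightarrow> complex" where
  "wp z = 1 + z * exp z"

definition classA :: "(complex \<Rightarrow> complex) \<Rightarrow> bool" where
  "classA f \<longleftrightarrow> f holomorphic_on ball 0 1 \<and> f 0 = 0 \<and> deriv f 0 = 1"

text \<open>The function z f'(z)/f(z), with its removable value 1 at z = 0.\<close>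
definition starquot :: "(complex \<Rightarrow> complex) \<Rightarrow> complex \<Rightarrow> complex" where
  "starquot f z = (if z = 0 then 1 else z * deriv f z / f z)"

text \<open>The class S*_wp; f(z) \<noteq> 0 on D \ {0} is needed for zf'/f to be analytic.\<close>
definition starlike_wp :: "(complex \<Rightarrow> complex) \<Rightarrow> bool" where
  "starlike_wp f \<longleftrightarrow> classA f \<and> (\<forall>z\<in>ball 0 1. z \<noteq> 0 \<longrightarrow> f z \<noteq> 0) \<and>
     subordinate (starquot f) wp"

definition coef :: "(complex \<Rightarrow> complex) \<Rightarrow> nat \<Rightarrow> complex" where
  "coef f k = (deriv ^^ k) f 0 / fact k"

end

theory Submission
  imports Defs "HOL-Complex_Analysis.Complex_Analysis"
begin

lemma cis_int_integral:
  fixes m :: int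
  shows "((\<lambda>t. cis (of_int m * t)) has_integral (if m = 0 then 2*pi else 0)) {0..2*pi}"
proof (cases "m = 0")
  case True
  then show ?thesis using has_integral_const_real[of "1::complex" 0 "2*pi"] by (simp add: scaleR_conv_of_real)
next
  case False
  define F where "F = (\<lambda>z::complex. exp (\<i> * of_int m * z) / (\<i> * of_int m))"
  have d: "((\<lambda>x. F (of_real x)) has_vector_derivative cis (of_int m * t)) (at t within {0..2*pi})" for t
  proof (rule has_vector_derivative_real_field)
    show "(F has_field_derivative cis (of_int m * t)) (at (of_real t))"
      unfolding F_def using False
      by (auto intro!: derivative_eq_intros simp: cis_conv_exp field_simps)
  qed
  have "((\<lambda>t. cis (of_int m * t)) has_integral (F (of_real (2*pi)) - F (of_real 0))) {0..2*pi}"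
    by (rule fundamental_theorem_of_calculus) (use d in auto)
  moreover have "F (of_real (2*pi)) - F (of_real 0) = 0"
  proof -
    have "exp (\<i> * of_int m * of_real (2*pi)) = 1"
      using exp_integer_2pi[of "of_int m"] by (simp add: mult_ac)
    then show ?thesis by (simp add: F_def)
  qed
  ultimately show ?thesis using False by (simp add: scaleR_conv_of_real)
qed


lemma parseval_finite:
  fixes c :: "nat \<Rightarrow> complex" and r :: real
  shows "((\<lambda>t. (cmod (\<Sum>k<N. c k * (of_real r * cis t)^k))^2) has_integral
           2*pi*(\<Sum>k<N. (cmod (c k))^2 * r^(2*k))) {0..2*pi}"
proof -
  define a where "a = (\<lambda>k l. c k * of_real r ^ k * cnj (c l) * of_real r ^ l)"
  have eq: "complex_of_real ((cmod (\<Sum>k<N. c k * (of_real r * cis t)^k))^2)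
      = (\<Sum>k<N. \<Sum>l<N. a k l * cis (of_int (int k - int l) * t))" for t
  proof -
    have "complex_of_real ((cmod (\<Sum>k<N. c k * (of_real r * cis t)^k))^2)
        = (\<Sum>k<N. c k * (of_real r * cis t)^k) * cnj (\<Sum>l<N. c l * (of_real r * cis t)^l)"
      by (rule complex_norm_square)
    also have "\<dots> = (\<Sum>k<N. \<Sum>l<N. (c k * (of_real r * cis t)^k) * cnj (c l * (of_real r * cis t)^l))"
      by (simp add: sum_product cnj_sum)
    also have "\<dots> = (\<Sum>k<N. \<Sum>l<N. a k l * cis (of_int (int k - int l) * t))"
    proof (intro sum.cong refl)
      fix k l
      have "(c k * (of_real r * cis t)^k) * cnj (c l * (of_real r * cis t)^l)
          = a k l * (cis (real k * t) * cis (- (real l * t)))"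
        by (simp add: a_def power_mult_distrib Complex.DeMoivre cis_cnj mult_ac)
      also have "\<dots> = a k l * cis (of_int (int k - int l) * t)"
        by (simp add: cis_mult algebra_simps)
      finally show "(c k * (of_real r * cis t)^k) * cnj (c l * (of_real r * cis t)^l)
          = a k l * cis (of_int (int k - int l) * t)" .
    qed
    finally show ?thesis .
  qed
  have "((\<lambda>t. \<Sum>k<N. \<Sum>l<N. a k l * cis (of_int (int k - int l) * t)) has_integral
        (\<Sum>k<N. \<Sum>l<N. a k l * of_real (if int k - int l = 0 then 2*pi else 0))) {0..2*pi}"
    by (intro has_integral_sum finite_lessThan has_integral_mult_right cis_int_integral)
  also have "(\<Sum>k<N. \<Sum>l<N. a k l * of_real (if int k - int l = 0 then 2*pi else 0))
      = (\<Sum>k<N. a k k * of_real (2*pi))"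
  proof (rule sum.cong[OF refl])
    fix k assume k: "k \<in> {..<N}"
    have "(\<Sum>l<N. a k l * of_real (if int k - int l = 0 then 2*pi else 0))
        = (\<Sum>l<N. if l = k then a k l * of_real (2*pi) else 0)"
      by (intro sum.cong refl) auto
    also have "\<dots> = a k k * of_real (2*pi)" using k by (simp add: sum.delta')
    finally show "(\<Sum>l<N. a k l * of_real (if int k - int l = 0 then 2*pi else 0)) = a k k * of_real (2*pi)" .
  qed
  also have "\<dots> = of_real (2*pi*(\<Sum>k<N. (cmod (c k))^2 * r^(2*k)))"
  proof -
    have "a k k * of_real (2*pi) = of_real (2*pi*((cmod (c k))^2 * r^(2*k)))" for k
    proof -
      have "a k k = (c k * cnj (c k)) * of_real (r^(2*k))"
        by (simp add: a_def power_mult power2_eq_square mult_ac)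
      also have "\<dots> = of_real ((cmod (c k))^2 * r^(2*k))"
        by (simp only: complex_norm_square[symmetric] of_real_mult)
      finally show ?thesis by simp
    qed
    then show ?thesis by (simp only: sum_distrib_left of_real_sum)
  qed
  finally have I: "((\<lambda>t. complex_of_real ((cmod (\<Sum>k<N. c k * (of_real r * cis t)^k))^2)) has_integral
        of_real (2*pi*(\<Sum>k<N. (cmod (c k))^2 * r^(2*k)))) {0..2*pi}"
    unfolding eq .
  from has_integral_linear[OF I bounded_linear_Re] show ?thesis by (simp add: o_def)
qed


lemma parseval:
  fixes c :: "nat \<Rightarrow> complex" and r :: real
  assumes r: "0 \<le> r" "ereal r < conv_radius c"
  shows "(\<lambda>k. (cmod (c k))^2 * r^(2*k)) sums
           (integral {0..2*pi} (\<lambda>t. (cmod (\<Sum>k. c k * (of_real r * cis t)^k))^2) / (2*pi))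
      \<and> (\<lambda>t. (cmod (\<Sum>k. c k * (of_real r * cis t)^k))^2) integrable_on {0..2*pi}"
proof -
  define S where "S = {0..2*pi}"
  define p where "p = (\<lambda>n t. \<Sum>i<n. c i * (of_real r * cis t)^i)"
  define h where "h = (\<lambda>t. \<Sum>i. c i * (of_real r * cis t)^i)"
  have ul0: "uniform_limit (cball 0 r) (\<lambda>n x. \<Sum>i<n. c i * (x - 0) ^ i)
              (\<lambda>x. suminf (\<lambda>i. c i * (x - 0) ^ i)) sequentially"
    by (rule powser_uniform_limit) (use r in auto)
  have "(\<lambda>t. of_real r * cis t) \<in> S \<rightarrow> cball 0 r"
    using r by (auto simp: norm_mult)
  from uniform_limit_compose'[OF ul0 this]
  have ul1: "uniform_limit S p h sequentially" by (simp add: p_def h_def)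
  have ul2: "uniform_limit S (\<lambda>n t. norm (p n t)) (\<lambda>t. norm (h t)) sequentially"
    by (rule uniform_limit_norm[OF ul1])
  have contp: "continuous_on S (p n)" for n
    unfolding p_def by (intro continuous_intros)
  have bnd: "bounded ((\<lambda>t. norm (p n t)) ` S)" for n
    by (intro compact_imp_bounded compact_continuous_image continuous_intros contp)
       (simp add: S_def)
  have bndl: "bounded ((\<lambda>t. norm (h t)) ` S)"
    by (rule uniform_limit_bounded[OF ul2]) (use bnd in auto)
  have ul3: "uniform_limit S (\<lambda>n t. norm (p n t) * norm (p n t)) (\<lambda>t. norm (h t) * norm (h t)) sequentially"
    by (intro uniform_lim_mult ul2 bndl)
  have cont3: "continuous_on {0..2*pi} (\<lambda>t. norm (p n t) * norm (p n t))" for n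
    using contp[of n] unfolding S_def by (intro continuous_intros)
  obtain I J where I: "\<And>n. ((\<lambda>t. norm (p n t) * norm (p n t)) has_integral I n) {0..2*pi}"
    and J: "((\<lambda>t. norm (h t) * norm (h t)) has_integral J) {0..2*pi}"
    and lim: "I \<longlonglongrightarrow> J"
    using uniform_limit_integral[OF ul3[unfolded S_def] cont3] by auto
  have In: "I n = 2*pi*(\<Sum>k<n. (cmod (c k))^2 * r^(2*k))" for n
  proof -
    have "((\<lambda>t. norm (p n t) * norm (p n t)) has_integral 2*pi*(\<Sum>k<n. (cmod (c k))^2 * r^(2*k))) {0..2*pi}"
      using parseval_finite[of c r n] by (simp add: p_def power2_eq_square)
    then show ?thesis using has_integral_unique[OF I[of n]] by blast
  qed
  have "J = integral {0..2*pi} (\<lambda>t. (cmod (\<Sum>k. c k * (of_real r * cis t)^k))^2)"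
    using J by (simp add: h_def power2_eq_square integral_unique)
  moreover have "(\<lambda>n. (\<Sum>k<n. (cmod (c k))^2 * r^(2*k))) \<longlonglongrightarrow> J / (2*pi)"
  proof -
    have "(\<lambda>n. I n / (2*pi)) \<longlonglongrightarrow> J / (2*pi)" by (intro tendsto_intros lim) simp
    moreover have "(2::real)*pi \<noteq> 0" using pi_gt_zero by linarith
    ultimately show ?thesis by (simp add: In)
  qed
  moreover have "(\<lambda>t. (cmod (\<Sum>k. c k * (of_real r * cis t)^k))^2) integrable_on {0..2*pi}"
    using J by (simp add: h_def power2_eq_square has_integral_integrable)
  ultimately show ?thesis by (simp add: sums_def)
qed


lemma series_f:
  assumes hol: "f holomorphic_on ball 0 1" and z: "z \<in> ball 0 1"
  shows "(\<lambda>k. coef f k * z^k) sums f z"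
  using holomorphic_power_series[OF hol z] by (simp add: coef_def)

lemma series_g:
  assumes hol: "f holomorphic_on ball 0 1" and z: "z \<in> ball 0 1"
  shows "(\<lambda>k. (of_nat k * coef f k) * z^k) sums (z * deriv f z)"
proof -
  have hd: "deriv f holomorphic_on ball 0 1" by (rule holomorphic_deriv[OF hol open_ball])
  have "(\<lambda>n. (deriv ^^ n) (deriv f) 0 / fact n * (z-0)^n) sums deriv f z"
    by (rule holomorphic_power_series[OF hd z])
  then have "(\<lambda>n. z * ((deriv ^^ n) (deriv f) 0 / fact n * (z-0)^n)) sums (z * deriv f z)"
    by (rule sums_mult)
  moreover have "z * ((deriv ^^ n) (deriv f) 0 / fact n * (z-0)^n)
      = (of_nat (Suc n) * coef f (Suc n)) * z^(Suc n)" for n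
  proof -
    have e: "(deriv ^^ n) (deriv f) = (deriv ^^ Suc n) f" by (simp only: funpow_Suc_right o_apply)
    have fs: "(fact (Suc n) :: complex) = of_nat (Suc n) * fact n" by simp
    have nz: "(of_nat (Suc n) :: complex) \<noteq> 0" "(fact n :: complex) \<noteq> 0"
      by (metis of_nat_eq_0_iff nat.distinct(1)) simp
    show ?thesis unfolding e coef_def fs using nz
      by (simp del: of_nat_Suc fact_Suc add: field_simps)
  qed
  ultimately have "(\<lambda>n. (of_nat (Suc n) * coef f (Suc n)) * z^(Suc n)) sums (z * deriv f z)"
    by simp
  then show ?thesis by (subst (asm) sums_Suc_iff) simp
qed

lemma wp_bound:
  assumes "cmod w < 1"
  shows "cmod (wp w) \<le> 1 + exp 1"
proof -
  have "cmod (wp w) \<le> 1 + cmod (w * exp w)" unfolding wp_def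
    using norm_triangle_ineq[of 1 "w * exp w"] by simp
  also have "cmod (w * exp w) = cmod w * exp (Re w)" by (simp add: norm_mult)
  also have "\<dots> \<le> 1 * exp 1"
  proof (rule mult_mono)
    show "exp (Re w) \<le> exp 1" using abs_Re_le_cmod[of w] assms by simp
  qed (use assms in auto)
  finally show ?thesis by simp
qed

lemma key_ineq:
  assumes "starlike_wp f" and z: "z \<in> ball 0 1"
  shows "cmod (z * deriv f z) \<le> (1 + exp 1) * cmod (f z)"
proof (cases "z = 0")
  case True then show ?thesis by simp
next
  case False
  from assms(1) have nz: "f z \<noteq> 0" using z False unfolding starlike_wp_def by auto
  from assms(1) obtain \<omega> where om: "\<forall>z\<in>ball 0 1. \<omega> z \<in> ball 0 1"
     "\<forall>z\<in>ball 0 1. starquot f z = wp (\<omega> z)"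
    unfolding starlike_wp_def subordinate_def by blast
  have "z * deriv f z / f z = wp (\<omega> z)" using om(2)[rule_format, OF z] False by (simp add: starquot_def)
  then have "z * deriv f z = wp (\<omega> z) * f z" using nz by (simp add: field_simps)
  moreover have "cmod (wp (\<omega> z)) \<le> 1 + exp 1" using om(1) z by (intro wp_bound) auto
  ultimately show ?thesis by (simp add: norm_mult mult_right_mono)
qed

lemma rstep:
  assumes st: "starlike_wp f" and al: "\<alpha> = (1 + exp 1)\<^sup>2" and r: "0 < r" "r < 1"
  shows "summable (\<lambda>k. ((real k)^2 - \<alpha>) * (cmod (coef f k))^2 * r^(2*k))
       \<and> (\<Sum>k. ((real k)^2 - \<alpha>) * (cmod (coef f k))^2 * r^(2*k)) \<le> 0"
proof -
  have hol: "f holomorphic_on ball 0 1" using st by (simp add: starlike_wp_def classA_def)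
  define a where "a = coef f"
  define b where "b = (\<lambda>k. of_nat k * a k)"
  have cr: "ereal r < conv_radius c"
    if "\<And>z. z \<in> ball 0 1 \<Longrightarrow> summable (\<lambda>k. c k * z^k)" for c :: "nat \<Rightarrow> complex"
  proof -
    have "conv_radius c \<ge> 1"
    proof (rule conv_radius_geI_ex')
      fix \<rho> :: real assume "0 < \<rho>" "ereal \<rho> < 1"
      then show "summable (\<lambda>n. c n * of_real \<rho> ^ n)" by (intro that) auto
    qed
    then show ?thesis using r by (meson ereal_less(3) order_less_le_trans)
  qed
  have cra: "ereal r < conv_radius a"
    by (rule cr) (use series_f[OF hol] sums_summable in \<open>auto simp: a_def\<close>)
  have crb: "ereal r < conv_radius b"
    by (rule cr) (use series_g[OF hol] sums_summable in \<open>auto simp: a_def b_def\<close>)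
  define z where "z = (\<lambda>t. of_real r * cis t)"
  have zin: "z t \<in> ball 0 1" for t using r by (simp add: z_def norm_mult)
  have fa: "(\<Sum>k. a k * (of_real r * cis t)^k) = f (z t)" for t
    using series_f[OF hol zin[of t]] by (simp add: a_def z_def sums_iff)
  have fb: "(\<Sum>k. b k * (of_real r * cis t)^k) = z t * deriv f (z t)" for t
    using series_g[OF hol zin[of t]] by (simp add: a_def b_def z_def sums_iff)
  define FF where "FF = (\<lambda>t. (cmod (f (z t)))^2)"
  define GG where "GG = (\<lambda>t. (cmod (z t * deriv f (z t)))^2)"
  from parseval[OF _ cra] r have PA: "(\<lambda>k. (cmod (a k))^2 * r^(2*k)) sums (integral {0..2*pi} FF / (2*pi))"
     "FF integrable_on {0..2*pi}"
    by (simp_all add: fa FF_def)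
  from parseval[OF _ crb] r have PB: "(\<lambda>k. (cmod (b k))^2 * r^(2*k)) sums (integral {0..2*pi} GG / (2*pi))"
     "GG integrable_on {0..2*pi}"
    by (simp_all add: fb GG_def)
  have "integral {0..2*pi} GG \<le> integral {0..2*pi} (\<lambda>t. \<alpha> * FF t)"
  proof (rule integral_le[OF PB(2)])
    show "(\<lambda>t. \<alpha> * FF t) integrable_on {0..2*pi}" using integrable_on_cmult_left[OF PA(2)] by simp
    fix t
    have "cmod (z t * deriv f (z t)) \<le> (1 + exp 1) * cmod (f (z t))"
      by (rule key_ineq[OF st zin])
    then have "(cmod (z t * deriv f (z t)))^2 \<le> ((1 + exp 1) * cmod (f (z t)))^2"
      by (intro power_mono) auto
    then show "GG t \<le> \<alpha> * FF t" by (simp add: GG_def FF_def al power_mult_distrib)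
  qed
  also have "\<dots> = \<alpha> * integral {0..2*pi} FF" by simp
  finally have le: "integral {0..2*pi} GG / (2*pi) \<le> \<alpha> * (integral {0..2*pi} FF / (2*pi))"
    by (simp add: divide_right_mono)
  have "(\<lambda>k. (cmod (b k))^2 * r^(2*k) - \<alpha> * ((cmod (a k))^2 * r^(2*k))) sums
        (integral {0..2*pi} GG / (2*pi) - \<alpha> * (integral {0..2*pi} FF / (2*pi)))"
    by (intro sums_diff sums_mult PA(1) PB(1))
  moreover have "(cmod (b k))^2 * r^(2*k) - \<alpha> * ((cmod (a k))^2 * r^(2*k))
      = ((real k)^2 - \<alpha>) * (cmod (coef f k))^2 * r^(2*k)" for k
    by (simp add: a_def b_def norm_mult power_mult_distrib algebra_simps)
  ultimately have "(\<lambda>k. ((real k)^2 - \<alpha>) * (cmod (coef f k))^2 * r^(2*k)) sums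
        (integral {0..2*pi} GG / (2*pi) - \<alpha> * (integral {0..2*pi} FF / (2*pi)))" by simp
  then show ?thesis using le by (simp add: sums_iff)
qed


theorem mainTheorem13:
  fixes f :: "complex \<Rightarrow> complex" and \<alpha> :: real
  assumes "starlike_wp f"
    and "\<alpha> = (1 + exp 1)\<^sup>2"
  shows "summable (\<lambda>n. (real (n+2) ^ 2 - \<alpha>) * (cmod (coef f (n+2)))\<^sup>2)
       \<and> (\<Sum>n. (real (n+2) ^ 2 - \<alpha>) * (cmod (coef f (n+2)))\<^sup>2) \<le> \<alpha> - 1
       \<and> (coef f 2 = 0 \<and> coef f 3 = 0 \<longrightarrow>
            (\<forall>k\<ge>4. cmod (coef f k) \<le> sqrt ((\<alpha> - 1) / (real k ^ 2 - \<alpha>))))"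
proof -
  note st = assms(1) and al = assms(2)
  have f0: "f 0 = 0" and d0: "deriv f 0 = 1" using st by (simp_all add: starlike_wp_def classA_def)
  have a0: "coef f 0 = 0" using f0 by (simp add: coef_def)
  have a1: "coef f 1 = 1" using d0 by (simp add: coef_def)
  have e2: "2 \<le> exp (1::real)" using exp_ge_add_one_self[of "1::real"] by simp
  have e3: "exp (1::real) < 3" using e_less_272 by simp
  have "(3::real)*3 \<le> (1 + exp 1) * (1 + exp 1)" using e2 by (intro mult_mono) auto
  then have al9: "9 \<le> \<alpha>" unfolding al by (simp add: power2_eq_square)
  have "(1 + exp 1) * (1 + exp 1) < (4::real)*4" using e3 by (intro mult_strict_mono) auto
  then have al16: "\<alpha> < 16" unfolding al by (simp add: power2_eq_square)
  define d where "d = (\<lambda>k. ((real k)^2 - \<alpha>) * (cmod (coef f k))^2)"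
  have dpos: "0 \<le> d k" if "4 \<le> k" for k
  proof -
    have "(4::real)^2 \<le> (real k)^2" using that by (intro power_mono) auto
    then show ?thesis using al16 by (simp add: d_def)
  qed
  have partial: "(\<Sum>k<N. d k) \<le> 0" if N: "4 \<le> N" for N
  proof -
    define g where "g = (\<lambda>r::real. \<Sum>k<N. ((real k)^2 - \<alpha>) * (cmod (coef f k))^2 * r^(2*k))"
    have "(g \<longlongrightarrow> g 1) (at_left 1)" unfolding g_def by (intro tendsto_intros)
    moreover have "eventually (\<lambda>r. g r \<le> 0) (at_left 1)"
    proof -
      have "eventually (\<lambda>r. r \<in> {0<..<1}) (at_left (1::real))"
        by (rule eventually_at_left_real) simp
      then show ?thesis
      proof eventually_elim
        case (elim r)
        then have r: "0 < r" "r < 1" by auto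
        from rstep[OF st al r] have sm: "summable (\<lambda>k. ((real k)^2 - \<alpha>) * (cmod (coef f k))^2 * r^(2*k))"
          and le: "(\<Sum>k. ((real k)^2 - \<alpha>) * (cmod (coef f k))^2 * r^(2*k)) \<le> 0" by auto
        have "g r \<le> (\<Sum>k. ((real k)^2 - \<alpha>) * (cmod (coef f k))^2 * r^(2*k))"
          unfolding g_def
        proof (rule sum_le_suminf[OF sm])
          fix n assume "n \<in> - {..<N}"
          then have "4 \<le> n" using N by auto
          then show "0 \<le> ((real n)^2 - \<alpha>) * (cmod (coef f n))^2 * r^(2*n)"
            using dpos[of n] r by (simp add: d_def)
        qed simp
        then show ?case using le by simp
      qed
    qed
    ultimately have "g 1 \<le> 0" by (rule tendsto_upperbound) simp
    then show ?thesis by (simp add: g_def d_def)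
  qed
  define t where "t = (\<lambda>n. (real (n+2) ^ 2 - \<alpha>) * (cmod (coef f (n+2)))\<^sup>2)"
  have td: "t n = d (n+2)" for n by (simp add: t_def d_def)
  have shift: "(\<Sum>k<M+2. d k) = d 0 + d 1 + (\<Sum>n<M. t n)" for M
  proof -
    have "(\<Sum>k<Suc (Suc M). d k) = d 0 + (d (Suc 0) + (\<Sum>n<M. d (Suc (Suc n))))"
      by (simp only: sum.lessThan_Suc_shift)
    moreover have "(\<Sum>n<M. d (Suc (Suc n))) = (\<Sum>n<M. t n)" by (simp add: td)
    ultimately show ?thesis by (simp add: numeral_2_eq_2)
  qed
  have d0': "d 0 = 0" by (simp add: d_def a0)
  have d1': "d 1 = 1 - \<alpha>" using a1 by (simp add: d_def)
  have t01: "t 0 \<le> 0" "t 1 \<le> 0" using al9 by (simp_all add: t_def mult_nonpos_nonneg)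
  have bound: "(\<Sum>n<M. t n) \<le> \<alpha> - 1" for M
  proof (cases "M \<ge> 2")
    case True
    then show ?thesis using partial[of "M+2"] shift[of M] d0' d1' by simp
  next
    case False
    then have "M = 0 \<or> M = 1" by auto
    then show ?thesis using t01 al9 by auto
  qed
  have tpos: "0 \<le> t (n+2)" for n by (simp add: td dpos)
  have "summable (\<lambda>n. t (n+2))"
  proof (rule summableI_nonneg_bounded[OF tpos])
    fix M
    have "(\<Sum>n<M+2. t n) = t 0 + t 1 + (\<Sum>n<M. t (n+2))"
    proof -
      have "(\<Sum>k<Suc (Suc M). t k) = t 0 + (t (Suc 0) + (\<Sum>n<M. t (Suc (Suc n))))"
        by (simp only: sum.lessThan_Suc_shift)
      then show ?thesis by (simp add: numeral_2_eq_2)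
    qed
    then show "(\<Sum>n<M. t (n+2)) \<le> \<alpha> - 1 - t 0 - t 1" using bound[of "M+2"] by simp
  qed
  then have sm: "summable t" using summable_iff_shift[of t 2] by simp
  have sle: "suminf t \<le> \<alpha> - 1" by (rule suminf_le_const[OF sm bound])
  have part3: "cmod (coef f k) \<le> sqrt ((\<alpha> - 1) / (real k ^ 2 - \<alpha>))"
    if z: "coef f 2 = 0" "coef f 3 = 0" and k: "k \<ge> 4" for k
  proof -
    have "t 0 = 0" "t 1 = 0" using z by (simp_all add: t_def numeral_3_eq_3 numeral_2_eq_2)
    then have tnn: "0 \<le> t n" for n
    proof (cases "n < 2")
      case False
      then have "n = (n-2) + 2" by simp
      then show ?thesis using tpos[of "n-2"] by metis
    qed (auto simp: less_2_cases_iff)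
    have "t (k-2) \<le> suminf t"
      using sum_le_suminf[OF sm, of "{k-2}"] tnn by auto
    moreover have "k - 2 + 2 = k" using k by simp
    ultimately have "d k \<le> \<alpha> - 1" using sle td[of "k-2"] by simp
    moreover have kpos: "0 < real k ^ 2 - \<alpha>"
    proof -
      have "(4::real)^2 \<le> (real k)^2" using k by (intro power_mono) auto
      then show ?thesis using al16 by simp
    qed
    ultimately have "(cmod (coef f k))^2 \<le> (\<alpha> - 1) / (real k ^ 2 - \<alpha>)"
      by (simp add: d_def pos_le_divide_eq mult.commute)
    then show ?thesis by (rule real_le_rsqrt)
  qed
  show ?thesis using sm sle part3 by (simp add: t_def)
qed

end
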